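(* Let $(A,\mu)$ be an associative algebra over a field $k$, $\alpha:A\to A$ an algebra endomorphism, and $T:A\otimes A\to A\otimes A$, $\tilde T_1,\tilde T_2:A\otimes A\otimes A\to A\otimes A\otimes A$ linear maps satisfying $(\alpha\otimes\alpha)\circ T=T\circ(\alpha\otimes\alpha)$, $T\circ(\mathrm{id}_A\otimes\mu)=(\mathrm{id}_A\otimes\mu)\circ\tilde T_1\circ(T\otimes\mathrm{id}_A)$, $T\circ(\mu\otimes\mathrm{id}_A)=(\mu\otimes\mathrm{id}_A)\circ\tilde T_2\circ(\mathrm{id}_A\otimes T)$, $\tilde T_1\circ(T\otimes\mathrm{id}_A)\circ(\alpha\otimes T)=\tilde T_2\circ(\mathrm{id}_A\otimes T)\circ(T\otimes\alpha)$. Then $(A,\mu\circ T,\alpha)$ is a Hom-associative algebra.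
   Context: Algebras are not assumed unital. A Hom-associative algebra is a triple $(A,\mu,\alpha)$ with $\mu(a\otimes a')=aa'$ and $\alpha$ linear such that $\alpha(aa')=\alpha(a)\alpha(a')$ and $\alpha(a)(a'a'')=(aa')\alpha(a'')$ for all $a,a',a''\in A$. *)

theory Defs
  imports Main "HOL.Vector_Spaces" "HOL-Library.Poly_Mapping"
begin

definition assoc_algebra :: "('k::field \<Rightarrow> 'a::ab_group_add \<Rightarrow> 'a) \<Rightarrow> ('a \<Rightarrow> 'a \<Rightarrow> 'a) \<Rightarrow> bool" where
  "assoc_algebra scale mult \<longleftrightarrow>
     vector_space scale \<and>
     (\<forall>b. Vector_Spaces.linear scale scale (\<lambda>a. mult a b)) \<and>
     (\<forall>a. Vector_Spaces.linear scale scale (mult a)) \<and>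
     (\<forall>a b c. mult (mult a b) c = mult a (mult b c))"

definition algebra_endo :: "('k::field \<Rightarrow> 'a::ab_group_add \<Rightarrow> 'a) \<Rightarrow> ('a \<Rightarrow> 'a \<Rightarrow> 'a) \<Rightarrow> ('a \<Rightarrow> 'a) \<Rightarrow> bool" where
  "algebra_endo scale mult alpha \<longleftrightarrow>
     Vector_Spaces.linear scale scale alpha \<and> (\<forall>a b. alpha (mult a b) = mult (alpha a) (alpha b))"

definition hom_assoc_algebra :: "('k::field \<Rightarrow> 'a::ab_group_add \<Rightarrow> 'a) \<Rightarrow> ('a \<Rightarrow> 'a \<Rightarrow> 'a) \<Rightarrow> ('a \<Rightarrow> 'a) \<Rightarrow> bool" where
  "hom_assoc_algebra scale mu alpha \<longleftrightarrow>
     vector_space scale \<and>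
     (\<forall>b. Vector_Spaces.linear scale scale (\<lambda>a. mu a b)) \<and>
     (\<forall>a. Vector_Spaces.linear scale scale (mu a)) \<and>
     Vector_Spaces.linear scale scale alpha \<and>
     (\<forall>a a'. alpha (mu a a') = mu (alpha a) (alpha a')) \<and>
     (\<forall>a a' a''. mu (alpha a) (mu a' a'') = mu (mu a a') (alpha a''))"

text \<open>Construction: the free k-vector space on A \<times> A (finitely supported functions
  from pairs to k) modulo the subspace N2 spanned by the bilinearity relations; similarly
  for three factors.  Elements of the tensor product are represented by formal linear
  combinations; two representatives denote the same tensor iff their difference lies in N.
  A linear endomorphism of the tensor product is represented by a linear map of the free
  space preserving N (every linear map of the quotient lifts to such a map, since over a
  field the projection has a linear section).\<close>

definition pm_scale :: "'k::field \<Rightarrow> ('x \<Rightarrow>\<^sub>0 'k) \<Rightarrow> ('x \<Rightarrow>\<^sub>0 'k)" where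
  "pm_scale c p = Poly_Mapping.map (\<lambda>v. c * v) p"

definition lin_ext :: "('k::field \<Rightarrow> 'b::ab_group_add \<Rightarrow> 'b) \<Rightarrow> ('x \<Rightarrow> 'b) \<Rightarrow> ('x \<Rightarrow>\<^sub>0 'k) \<Rightarrow> 'b" where
  "lin_ext s f p = (\<Sum>x\<in>Poly_Mapping.keys p. s (Poly_Mapping.lookup p x) (f x))"

definition tens2 :: "'a \<Rightarrow> 'a \<Rightarrow> ('a \<times> 'a \<Rightarrow>\<^sub>0 'k::field)" where
  "tens2 a b = Poly_Mapping.single (a, b) 1"

definition tens3 :: "'a \<Rightarrow> 'a \<Rightarrow> 'a \<Rightarrow> ('a \<times> 'a \<times> 'a \<Rightarrow>\<^sub>0 'k::field)" where
  "tens3 a b c = Poly_Mapping.single (a, b, c) 1"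

definition rel2 :: "('k::field \<Rightarrow> 'a::ab_group_add \<Rightarrow> 'a) \<Rightarrow> ('a \<times> 'a \<Rightarrow>\<^sub>0 'k) set" where
  "rel2 scale =
     {tens2 (a + a') b - tens2 a b - tens2 a' b | a a' b. True} \<union>
     {tens2 a (b + b') - tens2 a b - tens2 a b' | a b b'. True} \<union>
     {tens2 (scale c a) b - pm_scale c (tens2 a b) | c a b. True} \<union>
     {tens2 a (scale c b) - pm_scale c (tens2 a b) | c a b. True}"

definition rel3 :: "('k::field \<Rightarrow> 'a::ab_group_add \<Rightarrow> 'a) \<Rightarrow> ('a \<times> 'a \<times> 'a \<Rightarrow>\<^sub>0 'k) set" where
  "rel3 scale =
     {tens3 (a + a') b c - tens3 a b c - tens3 a' b c | a a' b c. True} \<union>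
     {tens3 a (b + b') c - tens3 a b c - tens3 a b' c | a b b' c. True} \<union>
     {tens3 a b (c + c') - tens3 a b c - tens3 a b c' | a b c c'. True} \<union>
     {tens3 (scale r a) b c - pm_scale r (tens3 a b c) | r a b c. True} \<union>
     {tens3 a (scale r b) c - pm_scale r (tens3 a b c) | r a b c. True} \<union>
     {tens3 a b (scale r c) - pm_scale r (tens3 a b c) | r a b c. True}"

definition N2 :: "('k::field \<Rightarrow> 'a::ab_group_add \<Rightarrow> 'a) \<Rightarrow> ('a \<times> 'a \<Rightarrow>\<^sub>0 'k) set" where
  "N2 scale = module.span pm_scale (rel2 scale)"

definition N3 :: "('k::field \<Rightarrow> 'a::ab_group_add \<Rightarrow> 'a) \<Rightarrow> ('a \<times> 'a \<times> 'a \<Rightarrow>\<^sub>0 'k) set" where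
  "N3 scale = module.span pm_scale (rel3 scale)"

definition teq2 :: "('k::field \<Rightarrow> 'a::ab_group_add \<Rightarrow> 'a) \<Rightarrow> ('a \<times> 'a \<Rightarrow>\<^sub>0 'k) \<Rightarrow> ('a \<times> 'a \<Rightarrow>\<^sub>0 'k) \<Rightarrow> bool" where
  "teq2 scale p q \<longleftrightarrow> p - q \<in> N2 scale"

definition teq3 :: "('k::field \<Rightarrow> 'a::ab_group_add \<Rightarrow> 'a) \<Rightarrow> ('a \<times> 'a \<times> 'a \<Rightarrow>\<^sub>0 'k) \<Rightarrow> ('a \<times> 'a \<times> 'a \<Rightarrow>\<^sub>0 'k) \<Rightarrow> bool" where
  "teq3 scale p q \<longleftrightarrow> p - q \<in> N3 scale"

definition tensor_endo2 :: "('k::field \<Rightarrow> 'a::ab_group_add \<Rightarrow> 'a) \<Rightarrow> (('a \<times> 'a \<Rightarrow>\<^sub>0 'k) \<Rightarrow> ('a \<times> 'a \<Rightarrow>\<^sub>0 'k)) \<Rightarrow> bool" where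
  "tensor_endo2 scale T \<longleftrightarrow> Vector_Spaces.linear pm_scale pm_scale T \<and> T ` N2 scale \<subseteq> N2 scale"

definition tensor_endo3 :: "('k::field \<Rightarrow> 'a::ab_group_add \<Rightarrow> 'a) \<Rightarrow> (('a \<times> 'a \<times> 'a \<Rightarrow>\<^sub>0 'k) \<Rightarrow> ('a \<times> 'a \<times> 'a \<Rightarrow>\<^sub>0 'k)) \<Rightarrow> bool" where
  "tensor_endo3 scale T \<longleftrightarrow> Vector_Spaces.linear pm_scale pm_scale T \<and> T ` N3 scale \<subseteq> N3 scale"

definition mu2 :: "('k::field \<Rightarrow> 'a::ab_group_add \<Rightarrow> 'a) \<Rightarrow> ('a \<Rightarrow> 'a \<Rightarrow> 'a) \<Rightarrow> ('a \<times> 'a \<Rightarrow>\<^sub>0 'k) \<Rightarrow> 'a" where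
  "mu2 scale mult = lin_ext scale (\<lambda>(a, b). mult a b)"

definition otimes2 :: "('a \<Rightarrow> 'a) \<Rightarrow> ('a \<Rightarrow> 'a) \<Rightarrow> ('a \<times> 'a \<Rightarrow>\<^sub>0 'k::field) \<Rightarrow> ('a \<times> 'a \<Rightarrow>\<^sub>0 'k)" where
  "otimes2 f g = lin_ext pm_scale (\<lambda>(a, b). tens2 (f a) (g b))"

definition id_ot_mu :: "('a \<Rightarrow> 'a \<Rightarrow> 'a) \<Rightarrow> ('a \<times> 'a \<times> 'a \<Rightarrow>\<^sub>0 'k::field) \<Rightarrow> ('a \<times> 'a \<Rightarrow>\<^sub>0 'k)" where
  "id_ot_mu mult = lin_ext pm_scale (\<lambda>(a, b, c). tens2 a (mult b c))"

definition mu_ot_id :: "('a \<Rightarrow> 'a \<Rightarrow> 'a) \<Rightarrow> ('a \<times> 'a \<times> 'a \<Rightarrow>\<^sub>0 'k::field) \<Rightarrow> ('a \<times> 'a \<Rightarrow>\<^sub>0 'k)" where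
  "mu_ot_id mult = lin_ext pm_scale (\<lambda>(a, b, c). tens2 (mult a b) c)"

definition ot_right :: "('a \<times> 'a \<Rightarrow>\<^sub>0 'k::field) \<Rightarrow> 'a \<Rightarrow> ('a \<times> 'a \<times> 'a \<Rightarrow>\<^sub>0 'k)" where
  "ot_right q c = lin_ext pm_scale (\<lambda>(a, b). tens3 a b c) q"

definition ot_left :: "'a \<Rightarrow> ('a \<times> 'a \<Rightarrow>\<^sub>0 'k::field) \<Rightarrow> ('a \<times> 'a \<times> 'a \<Rightarrow>\<^sub>0 'k)" where
  "ot_left a q = lin_ext pm_scale (\<lambda>(b, c). tens3 a b c) q"

definition map_ot_T :: "('a \<Rightarrow> 'a) \<Rightarrow> (('a \<times> 'a \<Rightarrow>\<^sub>0 'k::field) \<Rightarrow> ('a \<times> 'a \<Rightarrow>\<^sub>0 'k))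
    \<Rightarrow> ('a \<times> 'a \<times> 'a \<Rightarrow>\<^sub>0 'k) \<Rightarrow> ('a \<times> 'a \<times> 'a \<Rightarrow>\<^sub>0 'k)" where
  "map_ot_T f T = lin_ext pm_scale (\<lambda>(a, b, c). ot_left (f a) (T (tens2 b c)))"

definition T_ot_map :: "(('a \<times> 'a \<Rightarrow>\<^sub>0 'k::field) \<Rightarrow> ('a \<times> 'a \<Rightarrow>\<^sub>0 'k)) \<Rightarrow> ('a \<Rightarrow> 'a)
    \<Rightarrow> ('a \<times> 'a \<times> 'a \<Rightarrow>\<^sub>0 'k) \<Rightarrow> ('a \<times> 'a \<times> 'a \<Rightarrow>\<^sub>0 'k)" where
  "T_ot_map T f = lin_ext pm_scale (\<lambda>(a, b, c). ot_right (T (tens2 a b)) (f c))"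

definition twisted_mult :: "('k::field \<Rightarrow> 'a::ab_group_add \<Rightarrow> 'a) \<Rightarrow> ('a \<Rightarrow> 'a \<Rightarrow> 'a)
    \<Rightarrow> (('a \<times> 'a \<Rightarrow>\<^sub>0 'k) \<Rightarrow> ('a \<times> 'a \<Rightarrow>\<^sub>0 'k)) \<Rightarrow> 'a \<Rightarrow> 'a \<Rightarrow> 'a" where
  "twisted_mult scale mult T a b = mu2 scale mult (T (tens2 a b))"

end

theory Submission
  imports Defs
begin


lemma lookup_pm_scale: "Poly_Mapping.lookup (pm_scale c p) k = c * Poly_Mapping.lookup p k"
  unfolding pm_scale_def by transfer (simp add: when_def)

lemma keys_pm_scale: "Poly_Mapping.keys (pm_scale c p) \<subseteq> Poly_Mapping.keys p"
  by (auto simp: in_keys_iff lookup_pm_scale)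

lemma pm_vs: "vector_space (pm_scale :: 'k::field \<Rightarrow> ('x \<Rightarrow>\<^sub>0 'k) \<Rightarrow> _)"
  by unfold_locales (auto intro!: poly_mapping_eqI simp: lookup_pm_scale lookup_add algebra_simps)

lemma lin_ext_superset:
  assumes vs: "vector_space s" and "finite S" and "Poly_Mapping.keys p \<subseteq> S"
  shows "lin_ext s f p = (\<Sum>x\<in>S. s (Poly_Mapping.lookup p x) (f x))"
proof -
  interpret vector_space s by fact
  show ?thesis unfolding lin_ext_def
    by (rule sum.mono_neutral_left) (use assms in \<open>auto simp: in_keys_iff\<close>)
qed

lemma keys_add_sub: "Poly_Mapping.keys (p + q) \<subseteq> Poly_Mapping.keys p \<union> Poly_Mapping.keys q"
  by (auto simp: in_keys_iff lookup_add)

lemma lin_ext_linear: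
  fixes s :: "'k::field \<Rightarrow> 'b::ab_group_add \<Rightarrow> 'b" and f :: "'x \<Rightarrow> 'b"
  assumes vs: "vector_space s"
  shows "Vector_Spaces.linear pm_scale s (lin_ext s f)"
proof -
  interpret vector_space s by fact
  show ?thesis unfolding linear_iff
  proof (intro conjI allI)
    show "vector_space pm_scale" by (rule pm_vs)
    show "vector_space s" by fact
    fix x y :: "'x \<Rightarrow>\<^sub>0 'k"
    let ?S = "Poly_Mapping.keys x \<union> Poly_Mapping.keys y"
    have "lin_ext s f (x + y) = (\<Sum>k\<in>?S. s (Poly_Mapping.lookup (x+y) k) (f k))"
      by (rule lin_ext_superset[OF vs]) (simp_all add: keys_add_sub)
    also have "\<dots> = (\<Sum>k\<in>?S. s (Poly_Mapping.lookup x k) (f k)) + (\<Sum>k\<in>?S. s (Poly_Mapping.lookup y k) (f k))"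
      by (simp add: lookup_add scale_left_distrib sum.distrib)
    also have "\<dots> = lin_ext s f x + lin_ext s f y"
      by (simp add: lin_ext_superset[OF vs, symmetric])
    finally show "lin_ext s f (x + y) = lin_ext s f x + lin_ext s f y" .
  next
    fix c x
    have "lin_ext s f (pm_scale c x) = (\<Sum>k\<in>Poly_Mapping.keys x. s (Poly_Mapping.lookup (pm_scale c x) k) (f k))"
      by (rule lin_ext_superset[OF vs]) (auto simp: keys_pm_scale[THEN subsetD])
    also have "\<dots> = s c (lin_ext s f x)"
      by (simp add: lookup_pm_scale lin_ext_def scale_sum_right)
    finally show "lin_ext s f (pm_scale c x) = s c (lin_ext s f x)" .
  qed
qed

lemma lin_ext_single:
  assumes vs: "vector_space s"
  shows "lin_ext s f (Poly_Mapping.single x c) = s c (f x)"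
proof -
  interpret vector_space s by fact
  show ?thesis
    by (subst lin_ext_superset[OF vs, of "{x}"]) (auto simp: lookup_single)
qed

lemma single_scale: "Poly_Mapping.single x c = pm_scale c (Poly_Mapping.single x (1::'k::field))"
  by (rule poly_mapping_eqI) (simp add: lookup_pm_scale lookup_single when_def)

lemma pm_induct:
  assumes "P 0" and "\<And>x c p. P p \<Longrightarrow> P (Poly_Mapping.single x c + p)"
  shows "P p"
proof (induction p rule: update_induct)
  case const then show ?case by fact
next
  case (update f a b)
  have "Poly_Mapping.update a b f = Poly_Mapping.single a b + f"
    using update(1) by (intro poly_mapping_eqI) (auto simp: lookup_update lookup_add lookup_single in_keys_iff when_def)
  then show ?case using assms(2)[OF update(3)] by simp
qed

lemma linear_ext_eq:
  assumes f: "Vector_Spaces.linear pm_scale s f" and g: "Vector_Spaces.linear pm_scale s g"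
    and eq: "\<And>x. f (Poly_Mapping.single x (1::'k::field)) = g (Poly_Mapping.single x 1)"
  shows "f p = g p"
proof (induction p rule: pm_induct)
  case 1 then show ?case using f g by (simp add: linear_iff) (metis add_cancel_right_right)
next
  case (2 x c p)
  then show ?case using f g eq
    by (simp add: linear_iff single_scale[of x c])
qed


lemma lin_add: "Vector_Spaces.linear s1 s2 f \<Longrightarrow> f (x + y) = f x + f y"
  by (simp add: linear_iff)
lemma lin_scale: "Vector_Spaces.linear s1 s2 f \<Longrightarrow> f (s1 c x) = s2 c (f x)"
  by (simp add: linear_iff)
lemma lin_diff: assumes "Vector_Spaces.linear s1 s2 f" shows "f (x - y) = f x - f y"
proof -
  interpret linear s1 s2 f by fact
  show ?thesis by (rule diff)
qed
lemma lin_zero: assumes "Vector_Spaces.linear s1 s2 f" shows "f 0 = 0"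
proof -
  interpret linear s1 s2 f by fact
  show ?thesis by (rule zero)
qed
lemma lin_comp: "Vector_Spaces.linear s1 s2 f \<Longrightarrow> Vector_Spaces.linear s2 s3 g \<Longrightarrow> Vector_Spaces.linear s1 s3 (\<lambda>x. g (f x))"
  using Vector_Spaces.linear_compose[of s1 s2 f s3 g] by (simp add: o_def)
lemma lin_kill_span:
  assumes l: "Vector_Spaces.linear s1 s2 f" and z: "\<And>x. x \<in> B \<Longrightarrow> f x = 0"
    and x: "x \<in> module.span s1 B"
  shows "f x = 0"
proof -
  have "vector_space_pair s1 s2" using l by (simp add: linear_iff vector_space_pair_def)
  then show ?thesis using vector_space_pair.linear_eq_0_on_span[OF _ l z x] by blast
qed

lemma pm_scale_one: "pm_scale 1 p = p"
  by (rule poly_mapping_eqI) (simp add: lookup_pm_scale)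

lemma lin_ext_pm_single: "lin_ext pm_scale f (Poly_Mapping.single x c) = pm_scale c (f x)"
  by (rule lin_ext_single[OF pm_vs])

lemma lin_ext_pm_one: "lin_ext pm_scale f (Poly_Mapping.single x 1) = f x"
  by (simp add: lin_ext_pm_single pm_scale_one)



theorem theorem4p1:
  fixes scale :: "'k::field \<Rightarrow> 'a::ab_group_add \<Rightarrow> 'a"
    and mult :: "'a \<Rightarrow> 'a \<Rightarrow> 'a"
    and alpha :: "'a \<Rightarrow> 'a"
    and T :: "('a \<times> 'a \<Rightarrow>\<^sub>0 'k) \<Rightarrow> ('a \<times> 'a \<Rightarrow>\<^sub>0 'k)"
    and T1 T2 :: "('a \<times> 'a \<times> 'a \<Rightarrow>\<^sub>0 'k) \<Rightarrow> ('a \<times> 'a \<times> 'a \<Rightarrow>\<^sub>0 'k)"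
  assumes alg: "assoc_algebra scale mult"
    and endo: "algebra_endo scale mult alpha"
    and T_lin: "tensor_endo2 scale T"
    and T1_lin: "tensor_endo3 scale T1"
    and T2_lin: "tensor_endo3 scale T2"
    and h1: "\<forall>p. teq2 scale (otimes2 alpha alpha (T p)) (T (otimes2 alpha alpha p))"
    and h2: "\<forall>p. teq2 scale (T (id_ot_mu mult p)) (id_ot_mu mult (T1 (T_ot_map T id p)))"
    and h3: "\<forall>p. teq2 scale (T (mu_ot_id mult p)) (mu_ot_id mult (T2 (map_ot_T id T p)))"
    and h4: "\<forall>p. teq3 scale (T1 (T_ot_map T id (map_ot_T alpha T p)))
                            (T2 (map_ot_T id T (T_ot_map T alpha p)))"
  shows "hom_assoc_algebra scale (twisted_mult scale mult T) alpha"

proof -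
  interpret P2: vector_space "pm_scale :: 'k \<Rightarrow> ('a \<times> 'a \<Rightarrow>\<^sub>0 'k) \<Rightarrow> _" by (rule pm_vs)
  interpret P3: vector_space "pm_scale :: 'k \<Rightarrow> ('a \<times> 'a \<times> 'a \<Rightarrow>\<^sub>0 'k) \<Rightarrow> _" by (rule pm_vs)
  have vsA: "vector_space scale" and multL: "\<And>b. Vector_Spaces.linear scale scale (\<lambda>a. mult a b)"
    and multR: "\<And>a. Vector_Spaces.linear scale scale (mult a)"
    and assoc: "\<And>a b c. mult (mult a b) c = mult a (mult b c)"
    using alg unfolding assoc_algebra_def by auto
  interpret A: vector_space scale by (rule vsA)
  have alin: "Vector_Spaces.linear scale scale alpha" and amult: "\<And>a b. alpha (mult a b) = mult (alpha a) (alpha b)"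
    using endo unfolding algebra_endo_def by auto
  have Tlin: "Vector_Spaces.linear pm_scale pm_scale T" and TN: "\<And>p. p \<in> N2 scale \<Longrightarrow> T p \<in> N2 scale"
    using T_lin unfolding tensor_endo2_def by auto
  have T1lin: "Vector_Spaces.linear pm_scale pm_scale T1" and T2lin: "Vector_Spaces.linear pm_scale pm_scale T2"
    using T1_lin T2_lin unfolding tensor_endo3_def by auto
  have mLa: "mult (x + y) b = mult x b + mult y b" for x y b using lin_add[OF multL[of b]] by simp
  have mLs: "mult (scale c x) b = scale c (mult x b)" for c x b using lin_scale[OF multL[of b]] by simp
  have mRa: "mult a (x + y) = mult a x + mult a y" for x y a using lin_add[OF multR[of a]] by simp
  have mRs: "mult a (scale c x) = scale c (mult a x)" for c x a using lin_scale[OF multR[of a]] by simp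

  define mu where "mu = mu2 scale mult"
  have mulin: "Vector_Spaces.linear pm_scale scale mu"
    unfolding mu_def mu2_def by (rule lin_ext_linear[OF vsA])
  have mu_t: "mu (tens2 a b) = mult a b" for a b
    unfolding mu_def mu2_def tens2_def by (simp add: lin_ext_single[OF vsA])
  have mu_s: "mu (Poly_Mapping.single (a,b) c) = scale c (mult a b)" for a b c
    unfolding mu_def mu2_def by (simp add: lin_ext_single[OF vsA])

  have N2b: "x \<in> rel2 scale \<Longrightarrow> x \<in> N2 scale" for x unfolding N2_def by (rule P2.span_base)
  have R1: "tens2 (a + a') b - tens2 a b - tens2 a' b \<in> N2 scale" for a a' b
    by (rule N2b) (unfold rel2_def, blast)
  have R2: "tens2 a (b + b') - tens2 a b - tens2 a b' \<in> N2 scale" for a b b'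
    by (rule N2b) (unfold rel2_def, blast)
  have R3: "tens2 (scale c a) b - pm_scale c (tens2 a b) \<in> N2 scale" for c a b
    by (rule N2b) (unfold rel2_def, blast)
  have R4: "tens2 a (scale c b) - pm_scale c (tens2 a b) \<in> N2 scale" for c a b
    by (rule N2b) (unfold rel2_def, blast)
  have N2add: "x \<in> N2 scale \<Longrightarrow> y \<in> N2 scale \<Longrightarrow> x + y \<in> N2 scale" for x y
    unfolding N2_def by (rule P2.span_add)
  have N2neg: "x \<in> N2 scale \<Longrightarrow> - x \<in> N2 scale" for x
    unfolding N2_def by (rule P2.span_neg)

  have mu_kill: "mu p = 0" if "p \<in> N2 scale" for p
  proof (rule lin_kill_span[OF mulin _ that[unfolded N2_def]])
    fix x assume "x \<in> rel2 scale"
    then show "mu x = 0" unfolding rel2_def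
      by (auto simp: lin_diff[OF mulin] lin_scale[OF mulin] mu_t mLa mRa mLs mRs)
  qed
  have mu_eq: "mu X = mu Y" if "X - Y \<in> N2 scale" for X Y
    using mu_kill[OF that] lin_diff[OF mulin, of X Y] by simp
  have muT_eq: "mu (T X) = mu (T Y)" if "X - Y \<in> N2 scale" for X Y
    using mu_kill[OF TN[OF that]] lin_diff[OF mulin, of "T X" "T Y"] lin_diff[OF Tlin, of X Y] by simp
  have muTlin: "Vector_Spaces.linear pm_scale scale (\<lambda>p. mu (T p))" by (rule lin_comp[OF Tlin mulin])

  show ?thesis unfolding hom_assoc_algebra_def
  proof (intro conjI allI)
    show "vector_space scale" by (rule vsA)
    show "Vector_Spaces.linear scale scale alpha" by (rule alin)
    fix b
    show "Vector_Spaces.linear scale scale (\<lambda>a. twisted_mult scale mult T a b)"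
      unfolding linear_iff twisted_mult_def mu_def[symmetric]
    proof (intro conjI allI)
      show "vector_space scale" by (rule vsA)
      show "vector_space scale" by (rule vsA)
      fix x y
      have "mu (T (tens2 (x + y) b)) = mu (T (tens2 x b + tens2 y b))"
        by (rule muT_eq) (use R1[of x y b] in \<open>simp add: algebra_simps\<close>)
      then show "mu (T (tens2 (x + y) b)) = mu (T (tens2 x b)) + mu (T (tens2 y b))"
        by (simp add: lin_add[OF muTlin])
    next
      fix c x
      have "mu (T (tens2 (scale c x) b)) = mu (T (pm_scale c (tens2 x b)))"
        by (rule muT_eq) (use R3[of c x b] in simp)
      then show "mu (T (tens2 (scale c x) b)) = scale c (mu (T (tens2 x b)))"
        by (simp add: lin_scale[OF muTlin])
    qed
  next
    fix a
    show "Vector_Spaces.linear scale scale (twisted_mult scale mult T a)"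
      unfolding linear_iff twisted_mult_def mu_def[symmetric]
    proof (intro conjI allI)
      show "vector_space scale" by (rule vsA)
      show "vector_space scale" by (rule vsA)
      fix x y
      have "mu (T (tens2 a (x + y))) = mu (T (tens2 a x + tens2 a y))"
        by (rule muT_eq) (use R2[of a x y] in \<open>simp add: algebra_simps\<close>)
      then show "mu (T (tens2 a (x + y))) = mu (T (tens2 a x)) + mu (T (tens2 a y))"
        by (simp add: lin_add[OF muTlin])
    next
      fix c x
      have "mu (T (tens2 a (scale c x))) = mu (T (pm_scale c (tens2 a x)))"
        by (rule muT_eq) (use R4[of a c x] in simp)
      then show "mu (T (tens2 a (scale c x))) = scale c (mu (T (tens2 a x)))"
        by (simp add: lin_scale[OF muTlin])
    qed
  next
    fix a a'
    have otlin: "Vector_Spaces.linear pm_scale pm_scale (otimes2 alpha alpha :: ('a \<times> 'a \<Rightarrow>\<^sub>0 'k) \<Rightarrow> _)"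
      unfolding otimes2_def by (rule lin_ext_linear[OF pm_vs])
    have ot_t: "otimes2 alpha alpha (tens2 x y :: 'a \<times> 'a \<Rightarrow>\<^sub>0 'k) = tens2 (alpha x) (alpha y)" for x y
      unfolding otimes2_def by (simp add: tens2_def lin_ext_pm_one)
    have amu: "(\<lambda>p. mu (otimes2 alpha alpha p)) p = (\<lambda>p. alpha (mu p)) p" for p
    proof (rule linear_ext_eq[OF lin_comp[OF otlin mulin] lin_comp[OF mulin alin]])
      fix x :: "'a \<times> 'a"
      obtain u v where x: "x = (u, v)" by (cases x)
      show "mu (otimes2 alpha alpha (Poly_Mapping.single x 1)) = alpha (mu (Poly_Mapping.single x 1))"
        unfolding x by (simp add: tens2_def[symmetric] ot_t mu_t amult)
    qed
    have "alpha (mu (T (tens2 a a'))) = mu (otimes2 alpha alpha (T (tens2 a a')))"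
      using amu by simp
    also have "\<dots> = mu (T (otimes2 alpha alpha (tens2 a a')))"
      by (rule mu_eq) (use h1 in \<open>simp add: teq2_def\<close>)
    also have "\<dots> = mu (T (tens2 (alpha a) (alpha a')))" by (simp add: ot_t)
    finally show "alpha (twisted_mult scale mult T a a') = twisted_mult scale mult T (alpha a) (alpha a')"
      unfolding twisted_mult_def mu_def .
  next
    fix a a' a''
    have idmu_lin: "Vector_Spaces.linear pm_scale pm_scale (id_ot_mu mult :: ('a \<times> 'a \<times> 'a \<Rightarrow>\<^sub>0 'k) \<Rightarrow> _)"
      unfolding id_ot_mu_def by (rule lin_ext_linear[OF pm_vs])
    have muid_lin: "Vector_Spaces.linear pm_scale pm_scale (mu_ot_id mult :: ('a \<times> 'a \<times> 'a \<Rightarrow>\<^sub>0 'k) \<Rightarrow> _)"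
      unfolding mu_ot_id_def by (rule lin_ext_linear[OF pm_vs])
    have otl_lin: "Vector_Spaces.linear pm_scale pm_scale (ot_left x :: ('a \<times> 'a \<Rightarrow>\<^sub>0 'k) \<Rightarrow> _)" for x
      unfolding ot_left_def by (rule lin_ext_linear[OF pm_vs])
    have otr_lin: "Vector_Spaces.linear pm_scale pm_scale (\<lambda>q. ot_right q x :: 'a \<times> 'a \<times> 'a \<Rightarrow>\<^sub>0 'k)" for x
      unfolding ot_right_def by (rule lin_ext_linear[OF pm_vs])
    have idmu_t: "id_ot_mu mult (tens3 x y z :: 'a \<times> 'a \<times> 'a \<Rightarrow>\<^sub>0 'k) = tens2 x (mult y z)" for x y z
      unfolding id_ot_mu_def tens3_def by (simp add: lin_ext_pm_one)
    have muid_t: "mu_ot_id mult (tens3 x y z :: 'a \<times> 'a \<times> 'a \<Rightarrow>\<^sub>0 'k) = tens2 (mult x y) z" for x y z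
      unfolding mu_ot_id_def tens3_def by (simp add: lin_ext_pm_one)
    have otl_s: "ot_left x (Poly_Mapping.single (y, z) c :: 'a \<times> 'a \<Rightarrow>\<^sub>0 'k) = pm_scale c (tens3 x y z)" for x y z c
      unfolding ot_left_def by (simp add: lin_ext_pm_single)
    have otr_s: "ot_right (Poly_Mapping.single (x, y) c :: 'a \<times> 'a \<Rightarrow>\<^sub>0 'k) z = pm_scale c (tens3 x y z)" for x y z c
      unfolding ot_right_def by (simp add: lin_ext_pm_single)
    have mapT_t: "map_ot_T f T (tens3 x y z) = ot_left (f x) (T (tens2 y z))" for f x y z
      unfolding map_ot_T_def tens3_def by (simp add: lin_ext_pm_one)
    have Tmap_t: "T_ot_map T f (tens3 x y z) = ot_right (T (tens2 x y)) (f z)" for f x y z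
      unfolding T_ot_map_def tens3_def by (simp add: lin_ext_pm_one)
    have mim_lin: "Vector_Spaces.linear pm_scale scale (\<lambda>p. mu (id_ot_mu mult p))"
      by (rule lin_comp[OF idmu_lin mulin])
    have mmi_lin: "Vector_Spaces.linear pm_scale scale (\<lambda>p. mu (mu_ot_id mult p))"
      by (rule lin_comp[OF muid_lin mulin])
    have mim_kill: "mu (id_ot_mu mult p) = 0" if "p \<in> N3 scale" for p
    proof (rule lin_kill_span[OF mim_lin _ that[unfolded N3_def]])
      fix x assume "x \<in> rel3 scale"
      then show "mu (id_ot_mu mult x) = 0" unfolding rel3_def
        by (elim UnE CollectE exE conjE; simp only: lin_diff[OF mim_lin] lin_scale[OF mim_lin] idmu_t mu_t mLa mRa mLs mRs; simp)
    qed
    have assocL: "(\<lambda>p. mu (id_ot_mu mult p)) p = (\<lambda>p. mu (mu_ot_id mult p)) p" for p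
    proof (rule linear_ext_eq[OF mim_lin mmi_lin])
      fix x :: "'a \<times> 'a \<times> 'a"
      obtain u v w where x: "x = (u, v, w)" by (cases x)
      show "mu (id_ot_mu mult (Poly_Mapping.single x 1)) = mu (mu_ot_id mult (Poly_Mapping.single x 1))"
        unfolding x by (simp add: tens3_def[symmetric] idmu_t muid_t mu_t assoc)
    qed
    have zeroN: "tens2 x 0 \<in> N2 scale" for x
      using N2neg[OF R2[of x 0 0]] by simp
    have zeroN': "tens2 0 x \<in> N2 scale" for x
      using N2neg[OF R1[of 0 0 x]] by simp
    have LA: "tens2 x (mu q) - id_ot_mu mult (ot_left x q) \<in> N2 scale" for x q
    proof (induction q rule: pm_induct)
      case 1 then show ?case
        by (simp add: lin_zero[OF mulin] lin_zero[OF otl_lin] lin_zero[OF idmu_lin] zeroN)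
    next
      case (2 y c q)
      obtain u v where y: "y = (u, v)" by (cases y)
      let ?w = "mult u v"
      have "tens2 x (mu (Poly_Mapping.single y c + q)) - id_ot_mu mult (ot_left x (Poly_Mapping.single y c + q))
        = (tens2 x (scale c ?w + mu q) - tens2 x (scale c ?w) - tens2 x (mu q))
          + (tens2 x (scale c ?w) - pm_scale c (tens2 x ?w))
          + (tens2 x (mu q) - id_ot_mu mult (ot_left x q))"
      proof -
        have e1: "mu (Poly_Mapping.single y c + q) = scale c ?w + mu q"
          unfolding y by (simp only: lin_add[OF mulin] mu_s)
        have e2: "id_ot_mu mult (ot_left x (Poly_Mapping.single y c + q)) = pm_scale c (tens2 x ?w) + id_ot_mu mult (ot_left x q)"
          unfolding y by (simp only: lin_add[OF otl_lin] lin_add[OF idmu_lin] otl_s lin_scale[OF idmu_lin] idmu_t)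
        show ?thesis unfolding e1 e2 by (simp only: diff_add_eq diff_diff_eq add_diff_cancel_left' add_diff_eq diff_add_cancel) (simp add: algebra_simps)
      qed
      also have "\<dots> \<in> N2 scale" by (intro N2add R2 R4 2)
      finally show ?case .
    qed
    have LB: "mu_ot_id mult (ot_right q z) - tens2 (mu q) z \<in> N2 scale" for z q
    proof (induction q rule: pm_induct)
      case 1 then show ?case
        by (simp add: lin_zero[OF mulin] lin_zero[OF otr_lin] lin_zero[OF muid_lin] zeroN' N2neg)
    next
      case (2 y c q)
      obtain u v where y: "y = (u, v)" by (cases y)
      let ?w = "mult u v"
      have "mu_ot_id mult (ot_right (Poly_Mapping.single y c + q) z) - tens2 (mu (Poly_Mapping.single y c + q)) z
        = - (tens2 (scale c ?w + mu q) z - tens2 (scale c ?w) z - tens2 (mu q) z)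
          + - (tens2 (scale c ?w) z - pm_scale c (tens2 ?w z))
          + (mu_ot_id mult (ot_right q z) - tens2 (mu q) z)"
      proof -
        have e1: "mu (Poly_Mapping.single y c + q) = scale c ?w + mu q"
          unfolding y by (simp only: lin_add[OF mulin] mu_s)
        have e2: "mu_ot_id mult (ot_right (Poly_Mapping.single y c + q) z) = pm_scale c (tens2 ?w z) + mu_ot_id mult (ot_right q z)"
          unfolding y by (simp only: lin_add[OF otr_lin] lin_add[OF muid_lin] otr_s lin_scale[OF muid_lin] muid_t)
        show ?thesis unfolding e1 e2 by (simp add: algebra_simps)
      qed
      also have "\<dots> \<in> N2 scale" by (intro N2add N2neg R1 R3 2)
      finally show ?case .
    qed
    define q where "q = T (tens2 a' a'')"
    define p3 where "p3 = (tens3 a a' a'' :: 'a \<times> 'a \<times> 'a \<Rightarrow>\<^sub>0 'k)"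
    have "mu (T (tens2 (alpha a) (mu q))) = mu (T (id_ot_mu mult (ot_left (alpha a) q)))"
      by (rule muT_eq) (rule LA)
    also have "\<dots> = mu (id_ot_mu mult (T1 (T_ot_map T id (ot_left (alpha a) q))))"
      by (rule mu_eq) (use h2 in \<open>simp add: teq2_def\<close>)
    also have "ot_left (alpha a) q = map_ot_T alpha T p3"
      by (simp add: p3_def q_def mapT_t)
    also have "mu (id_ot_mu mult (T1 (T_ot_map T id (map_ot_T alpha T p3))))
        = mu (id_ot_mu mult (T2 (map_ot_T id T (T_ot_map T alpha p3))))"
    proof -
      have "mu (id_ot_mu mult (T1 (T_ot_map T id (map_ot_T alpha T p3)) - T2 (map_ot_T id T (T_ot_map T alpha p3)))) = 0"
        by (rule mim_kill) (use h4 in \<open>simp add: teq3_def\<close>)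
      then show ?thesis by (simp add: lin_diff[OF idmu_lin] lin_diff[OF mulin])
    qed
    also have "\<dots> = mu (mu_ot_id mult (T2 (map_ot_T id T (T_ot_map T alpha p3))))"
      using assocL by simp
    also have "\<dots> = mu (T (mu_ot_id mult (T_ot_map T alpha p3)))"
      by (rule mu_eq) (use N2neg[OF h3[rule_format, unfolded teq2_def]] in simp)
    also have "T_ot_map T alpha p3 = ot_right (T (tens2 a a')) (alpha a'')"
      by (simp add: p3_def Tmap_t)
    also have "mu (T (mu_ot_id mult (ot_right (T (tens2 a a')) (alpha a''))))
        = mu (T (tens2 (mu (T (tens2 a a'))) (alpha a'')))"
      by (rule muT_eq) (rule LB)
    finally show "twisted_mult scale mult T (alpha a) (twisted_mult scale mult T a' a'') =
       twisted_mult scale mult T (twisted_mult scale mult T a a') (alpha a'')"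
      unfolding twisted_mult_def mu_def[symmetric] q_def .
  qed
qed

end
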